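(* Assume $\rho_\alpha^{\mathrm{dir}}<1$, let $\theta^\star$ be the unique projected Bellman fixed point, and let $x_k:=\theta_k-\theta^\star$. Fix $\varepsilon>0$ with $\beta_\varepsilon:=\rho_\alpha^{\mathrm{dir}}+\varepsilon<1$, and let $p_\varepsilon$ and $C_\varepsilon$ be as described in the context. Then for every $k\ge0$, \[ \begin{aligned} \mathbb E[p_\varepsilon(b_k+\xi_{k+1})\mid\mathcal F_k]\le{}&2\sqrt{C_\varepsilon}\,\phi_{\max}\big(R_{\max}+(1+\gamma)\|\Phi\theta^\star\|_\infty\big)\\ &+2\sqrt{C_\varepsilon}\,\phi_{\max}\|R+\gamma PV_{\theta^\star}-\Phi\theta^\star\|_\infty\\ &+4\sqrt{C_\varepsilon}(1+\gamma)\phi_{\max}^2\,p_\varepsilon(x_k). \end{aligned} \]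
   Context: Consider a finite discounted MDP with state space $\mathcal S=\{1,\dots,|\mathcal S|\}$, action space $\mathcal A=\{1,\dots,|\mathcal A|\}$, transition probabilities $P(s'\mid s,a)$, real rewards $r(s,a,s')$, expected reward $R(s,a)=\sum_{s'}P(s'\mid s,a)r(s,a,s')$, and discount factor $\gamma\in(0,1)$. Let $R_{\max}:=\max|r(s,a,s')|$. State-action vectors are ordered as $(1,1),(2,1),\dots,(|\mathcal S|,1),(1,2),\dots$, and $e_i$ is the coordinate vector of pair $i$. The matrix $P$ has rows $P(\cdot\mid s,a)$, and $R$ has entries $R(s,a)$. The set $\Theta$ is the set of deterministic stationary policies. For $\pi\in\Theta$, $\Pi^\pi$ has entry $1$ at row $s$, column $(s,\pi(s))$, and zeros elsewhere. The feature matrix $\Phi$ has full column rank and rows $\phi(s,a)^\top$. Let $\phi_{\max}:=\max\|\phi(s,a)\|_2$, and define $V_\theta(s)=\max_a\phi(s,a)^\top\theta$. The step size is $\alpha\in(0,1)$. Markovian observations: fix a behavior policy $b(a\mid s)$. The trajectory evolves as $s_{k+1}\sim P(\cdot\mid s_k,a_k)$, $r_{k+1}=r(s_k,a_k,s_{k+1})$, $a_{k+1}\sim b(\cdot\mid s_{k+1})$, with $X_k=(s_k,a_k)$. The chain has a stationary distribution $d>0$, and $D=\mathrm{diag}(d)$. The filtration is $\mathcal F_k=\sigma(\theta_0,X_0,r_1,X_1,\dots,r_k,X_k)$, and $\theta_0$ is deterministic. The update is $\theta_{k+1}=\theta_k+\alpha\phi(X_k)\big(r_{k+1}+\gamma\max_u\phi(s_{k+1},u)^\top\theta_k-\phi(X_k)^\top\theta_k\big)$.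 Define $\delta(\theta):=R+\gamma PV_\theta-\Phi\theta$, \[ \xi_{k+1}:=\phi(X_k)\big(r_{k+1}+\gamma\max_u\phi(s_{k+1},u)^\top\theta_k-\phi(X_k)^\top\theta_k-e_{X_k}^\top\delta(\theta_k)\big), \] and $b_k:=\Phi^\top(e_{X_k}e_{X_k}^\top-D)\delta(\theta_k)$. A projected Bellman fixed point is a $\theta^\star$ with $\Phi^\top D\delta(\theta^\star)=0$. Define $A_\pi:=I-\alpha\Phi^\top D\Phi+\alpha\gamma\Phi^\top DP\Pi^\pi\Phi$, and let $\rho_\alpha^{\mathrm{dir}}:=\lim_k\max_{\pi_i\in\Theta}\|A_{\pi_k}\cdots A_{\pi_1}\|^{1/k}$. When $\rho_\alpha^{\mathrm{dir}}<1$, a unique projected Bellman fixed point exists. Lyapunov norm: define \[ V_\varepsilon^\infty(x):=\lim_{t\to\infty}\sum_{\ell=0}^t\beta_\varepsilon^{-2\ell}\max_{\pi_1,\dots,\pi_\ell\in\Theta}\|A_{\pi_\ell}\cdots A_{\pi_1}x\|_2^2, \] where the $\ell=0$ term is $\|x\|_2^2$, and $p_\varepsilon:=\sqrt{V_\varepsilon^\infty}$ (a norm). Let $C_\varepsilon\ge1$ satisfy $\|x\|_2^2\le V_\varepsilon^\infty(x)\le C_\varepsilon\|x\|_2^2$ for all $x$. *)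

theory Defs
  imports "HOL-Probability.Probability"
begin

text \<open>State-action pairs are the finite type 's \<times> 'a; features live in real^'n.
  A matrix real^'c^'r has rows indexed by 'r.\<close>

definition Pmat :: "('s::finite \<Rightarrow> 'a::finite \<Rightarrow> 's \<Rightarrow> real) \<Rightarrow> real^'s^('s \<times> 'a)" where
  "Pmat P = (\<chi> sa s'. P (fst sa) (snd sa) s')"

definition Rvec :: "('s::finite \<Rightarrow> 'a::finite \<Rightarrow> 's \<Rightarrow> real) \<Rightarrow> ('s \<Rightarrow> 'a \<Rightarrow> 's \<Rightarrow> real) \<Rightarrow> real^('s \<times> 'a)" where
  "Rvec P r = (\<chi> sa. \<Sum>s'\<in>UNIV. P (fst sa) (snd sa) s' * r (fst sa) (snd sa) s')"

definition Rmax :: "('s::finite \<Rightarrow> 'a::finite \<Rightarrow> 's \<Rightarrow> real) \<Rightarrow> real" where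
  "Rmax r = Max {\<bar>r s a s'\<bar> | s a s'. True}"

definition phimax :: "real^'n::finite^('s::finite \<times> 'a::finite) \<Rightarrow> real" where
  "phimax Phi = Max (range (\<lambda>sa. norm (Phi $ sa)))"

definition Dmat :: "('i::finite \<Rightarrow> real) \<Rightarrow> real^'i^'i" where
  "Dmat d = (\<chi> i j. if i = j then d i else 0)"

definition Pi_mat :: "('s::finite \<Rightarrow> 'a::finite) \<Rightarrow> real^('s \<times> 'a)^'s" where
  "Pi_mat \<pi> = (\<chi> s sa. if sa = (s, \<pi> s) then 1 else 0)"

definition outer :: "real^'i::finite \<Rightarrow> real^'j::finite \<Rightarrow> real^'j^'i" where
  "outer u v = (\<chi> i j. u $ i * v $ j)"

definition Vfun :: "real^'n::finite^('s::finite \<times> 'a::finite) \<Rightarrow> real^'n \<Rightarrow> real^'s" where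
  "Vfun Phi \<theta> = (\<chi> s. Max (range (\<lambda>a. Phi $ (s, a) \<bullet> \<theta>)))"

definition delta :: "('s::finite \<Rightarrow> 'a::finite \<Rightarrow> 's \<Rightarrow> real) \<Rightarrow> ('s \<Rightarrow> 'a \<Rightarrow> 's \<Rightarrow> real) \<Rightarrow> real
     \<Rightarrow> real^'n::finite^('s \<times> 'a) \<Rightarrow> real^'n \<Rightarrow> real^('s \<times> 'a)" where
  "delta P r \<gamma> Phi \<theta> = Rvec P r + \<gamma> *\<^sub>R (Pmat P *v Vfun Phi \<theta>) - Phi *v \<theta>"

definition Amat :: "('s::finite \<Rightarrow> 'a::finite \<Rightarrow> 's \<Rightarrow> real) \<Rightarrow> ('s \<times> 'a \<Rightarrow> real) \<Rightarrow> real \<Rightarrow> real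
     \<Rightarrow> real^'n::finite^('s \<times> 'a) \<Rightarrow> ('s \<Rightarrow> 'a) \<Rightarrow> real^'n^'n" where
  "Amat P d \<gamma> \<alpha> Phi \<pi> = mat 1 - \<alpha> *\<^sub>R (transpose Phi ** Dmat d ** Phi)
      + (\<alpha> * \<gamma>) *\<^sub>R (transpose Phi ** Dmat d ** Pmat P ** Pi_mat \<pi> ** Phi)"

text \<open>For the list [pi_1, ..., pi_k] this is A_{pi_k} ... A_{pi_1}.\<close>
definition Aprod :: "('s::finite \<Rightarrow> 'a::finite \<Rightarrow> 's \<Rightarrow> real) \<Rightarrow> ('s \<times> 'a \<Rightarrow> real) \<Rightarrow> real \<Rightarrow> real
     \<Rightarrow> real^'n::finite^('s \<times> 'a) \<Rightarrow> ('s \<Rightarrow> 'a) list \<Rightarrow> real^'n^'n" where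
  "Aprod P d \<gamma> \<alpha> Phi ps = foldl (\<lambda>A \<pi>. Amat P d \<gamma> \<alpha> Phi \<pi> ** A) (mat 1) ps"

definition rho_dir :: "('s::finite \<Rightarrow> 'a::finite \<Rightarrow> 's \<Rightarrow> real) \<Rightarrow> ('s \<times> 'a \<Rightarrow> real) \<Rightarrow> real \<Rightarrow> real
     \<Rightarrow> real^'n::finite^('s \<times> 'a) \<Rightarrow> real" where
  "rho_dir P d \<gamma> \<alpha> Phi = lim (\<lambda>k.
     (Max ((\<lambda>ps. onorm (\<lambda>x. Aprod P d \<gamma> \<alpha> Phi ps *v x)) ` {ps. length ps = k})) powr (1 / real k))"

definition Vinf :: "('s::finite \<Rightarrow> 'a::finite \<Rightarrow> 's \<Rightarrow> real) \<Rightarrow> ('s \<times> 'a \<Rightarrow> real) \<Rightarrow> real \<Rightarrow> real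
     \<Rightarrow> real^'n::finite^('s \<times> 'a) \<Rightarrow> real \<Rightarrow> real^'n \<Rightarrow> real" where
  "Vinf P d \<gamma> \<alpha> Phi \<beta> x = lim (\<lambda>t. \<Sum>l\<le>t. inverse \<beta> ^ (2 * l) *
     Max ((\<lambda>ps. (norm (Aprod P d \<gamma> \<alpha> Phi ps *v x))\<^sup>2) ` {ps. length ps = l}))"

definition peps :: "('s::finite \<Rightarrow> 'a::finite \<Rightarrow> 's \<Rightarrow> real) \<Rightarrow> ('s \<times> 'a \<Rightarrow> real) \<Rightarrow> real \<Rightarrow> real
     \<Rightarrow> real^'n::finite^('s \<times> 'a) \<Rightarrow> real \<Rightarrow> real^'n \<Rightarrow> real" where
  "peps P d \<gamma> \<alpha> Phi \<beta> x = sqrt (Vinf P d \<gamma> \<alpha> Phi \<beta> x)"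

fun qtheta :: "('s::finite \<Rightarrow> 'a::finite \<Rightarrow> 's \<Rightarrow> real) \<Rightarrow> real \<Rightarrow> real \<Rightarrow> real^'n::finite^('s \<times> 'a)
     \<Rightarrow> real^'n \<Rightarrow> (nat \<Rightarrow> 'w \<Rightarrow> 's) \<Rightarrow> (nat \<Rightarrow> 'w \<Rightarrow> 'a) \<Rightarrow> nat \<Rightarrow> 'w \<Rightarrow> real^'n" where
  "qtheta r \<gamma> \<alpha> Phi \<theta>0 s act 0 \<omega> = \<theta>0"
| "qtheta r \<gamma> \<alpha> Phi \<theta>0 s act (Suc k) \<omega> =
     (let \<theta> = qtheta r \<gamma> \<alpha> Phi \<theta>0 s act k \<omega>; x = (s k \<omega>, act k \<omega>) in
      \<theta> + (\<alpha> * (r (s k \<omega>) (act k \<omega>) (s (Suc k) \<omega>)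
                + \<gamma> * Max (range (\<lambda>u. Phi $ (s (Suc k) \<omega>, u) \<bullet> \<theta>)) - Phi $ x \<bullet> \<theta>)) *\<^sub>R Phi $ x)"

definition bvec :: "('s::finite \<Rightarrow> 'a::finite \<Rightarrow> 's \<Rightarrow> real) \<Rightarrow> ('s \<Rightarrow> 'a \<Rightarrow> 's \<Rightarrow> real) \<Rightarrow> real
     \<Rightarrow> real^'n::finite^('s \<times> 'a) \<Rightarrow> ('s \<times> 'a \<Rightarrow> real) \<Rightarrow> real^'n \<Rightarrow> 's \<times> 'a \<Rightarrow> real^'n" where
  "bvec P r \<gamma> Phi d \<theta> x =
     transpose Phi *v ((outer (axis x 1) (axis x 1) - Dmat d) *v delta P r \<gamma> Phi \<theta>)"

definition xivec :: "('s::finite \<Rightarrow> 'a::finite \<Rightarrow> 's \<Rightarrow> real) \<Rightarrow> ('s \<Rightarrow> 'a \<Rightarrow> 's \<Rightarrow> real) \<Rightarrow> real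
     \<Rightarrow> real^'n::finite^('s \<times> 'a) \<Rightarrow> real^'n \<Rightarrow> 's \<times> 'a \<Rightarrow> 's \<Rightarrow> real^'n" where
  "xivec P r \<gamma> Phi \<theta> x s' =
     (r (fst x) (snd x) s' + \<gamma> * Max (range (\<lambda>u. Phi $ (s', u) \<bullet> \<theta>)) - Phi $ x \<bullet> \<theta>
       - axis x 1 \<bullet> delta P r \<gamma> Phi \<theta>) *\<^sub>R Phi $ x"

text \<open>History X_0..X_k and the filtration F_k generated by it (rewards are functions of it).\<close>
definition hist :: "(nat \<Rightarrow> 'w \<Rightarrow> 's) \<Rightarrow> (nat \<Rightarrow> 'w \<Rightarrow> 'a) \<Rightarrow> nat \<Rightarrow> 'w \<Rightarrow> ('s \<times> 'a) list" where
  "hist s act k \<omega> = map (\<lambda>i. (s i \<omega>, act i \<omega>)) [0..<Suc k]"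

definition Filt :: "'w measure \<Rightarrow> (nat \<Rightarrow> 'w \<Rightarrow> 's) \<Rightarrow> (nat \<Rightarrow> 'w \<Rightarrow> 'a) \<Rightarrow> nat \<Rightarrow> 'w measure" where
  "Filt M s act k = vimage_algebra (space M) (hist s act k) (count_space UNIV)"

end

theory Submission
  imports Defs
begin


lemma max_range_diff:
  fixes f g :: "'u::finite \<Rightarrow> real"
  assumes "\<forall>u. \<bar>f u - g u\<bar> \<le> c"
  shows "\<bar>Max (range f) - Max (range g)\<bar> \<le> c"
proof -
  have "Max (range f) \<le> Max (range g) + c"
  proof (rule Max.boundedI)
    show "finite (range f)" by simp
    show "range f \<noteq> {}" by simp
    fix y assume "y \<in> range f" then obtain u where "y = f u" by auto
    moreover have "g u \<le> Max (range g)" by (rule Max_ge) auto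
    ultimately show "y \<le> Max (range g) + c" using assms[rule_format, of u] by linarith
  qed
  moreover have "Max (range g) \<le> Max (range f) + c"
  proof (rule Max.boundedI)
    show "finite (range g)" by simp
    show "range g \<noteq> {}" by simp
    fix y assume "y \<in> range g" then obtain u where "y = g u" by auto
    moreover have "f u \<le> Max (range f)" by (rule Max_ge) auto
    ultimately show "y \<le> Max (range f) + c" using assms[rule_format, of u] by linarith
  qed
  ultimately show ?thesis by linarith
qed

lemma max_range_abs:
  fixes g :: "'u::finite \<Rightarrow> real"
  assumes "\<forall>u. \<bar>g u\<bar> \<le> c"
  shows "\<bar>Max (range g)\<bar> \<le> c"
proof -
  have "Max (range g) \<in> range g" by (rule Max_in) auto
  then obtain u where "Max (range g) = g u" by blast
  then show ?thesis using assms by metis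
qed

lemma phimax_ge: "norm (Phi $ i) \<le> phimax Phi"
  unfolding phimax_def by (rule Max_ge) auto

lemma phimax_nonneg: "0 \<le> phimax Phi"
  using phimax_ge[of Phi] norm_ge_zero order_trans by blast

lemma Rmax_ge:
  fixes r :: "'s::finite \<Rightarrow> 'a::finite \<Rightarrow> 's \<Rightarrow> real"
  shows "\<bar>r s a s'\<bar> \<le> Rmax r"
proof -
  have fin: "finite {\<bar>r s a s'\<bar> | s a s'. True}"
    by (rule finite_subset[of _ "range (\<lambda>(s,a,s'). \<bar>r s a s'\<bar>)"]) (auto intro: rev_image_eqI[of "(s,a,s')" for s a s'])
  show ?thesis unfolding Rmax_def by (rule Max_ge[OF fin]) blast
qed

lemma Rmax_nonneg:
  fixes r :: "'s::finite \<Rightarrow> 'a::finite \<Rightarrow> 's \<Rightarrow> real"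
  shows "0 \<le> Rmax r"
  using Rmax_ge[of r] abs_ge_zero order_trans by blast

lemma row_dot_bound:
  fixes Phi :: "real^'n::finite^('s::finite \<times> 'a::finite)"
  shows "\<bar>Phi $ i \<bullet> x\<bar> \<le> phimax Phi * norm x"
proof -
  have "\<bar>Phi $ i \<bullet> x\<bar> \<le> norm (Phi $ i) * norm x" by (rule Cauchy_Schwarz_ineq2)
  also have "\<dots> \<le> phimax Phi * norm x" by (rule mult_right_mono[OF phimax_ge]) simp
  finally show ?thesis .
qed

lemma row_dot_inf:
  fixes Phi :: "real^'n::finite^('s::finite \<times> 'a::finite)"
  shows "\<bar>Phi $ i \<bullet> x\<bar> \<le> infnorm (Phi *v x)"
  using component_le_infnorm_cart[of "Phi *v x" i] by (simp add: matrix_vector_mul_component)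


lemma Vfun_diff:
  fixes Phi :: "real^'n::finite^('s::finite \<times> 'a::finite)"
  shows "\<bar>Vfun Phi \<theta> $ s' - Vfun Phi \<theta>s $ s'\<bar> \<le> phimax Phi * norm (\<theta> - \<theta>s)"
  unfolding Vfun_def vec_lambda_beta
  by (rule max_range_diff) (metis inner_diff_right row_dot_bound)

lemma Vmax_bound:
  fixes Phi :: "real^'n::finite^('s::finite \<times> 'a::finite)"
  shows "\<bar>Max (range (\<lambda>u. Phi $ (s', u) \<bullet> \<theta>))\<bar> \<le> infnorm (Phi *v \<theta>s) + phimax Phi * norm (\<theta> - \<theta>s)"
proof -
  have "\<bar>Vfun Phi \<theta> $ s'\<bar> \<le> \<bar>Vfun Phi \<theta>s $ s'\<bar> + phimax Phi * norm (\<theta> - \<theta>s)"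
    using Vfun_diff[of Phi \<theta> s' \<theta>s] by linarith
  moreover have "\<bar>Vfun Phi \<theta>s $ s'\<bar> \<le> infnorm (Phi *v \<theta>s)"
    unfolding Vfun_def vec_lambda_beta by (rule max_range_abs) (simp add: row_dot_inf)
  ultimately show ?thesis unfolding Vfun_def by simp
qed

lemma stoch_inner:
  fixes u :: "real^'j::finite"
  assumes "\<forall>j. 0 \<le> p j" "(\<Sum>j\<in>UNIV. p j) = 1" "\<forall>j. \<bar>u $ j\<bar> \<le> c"
  shows "\<bar>(\<Sum>j\<in>UNIV. p j * u $ j)\<bar> \<le> c"
proof -
  have "\<bar>(\<Sum>j\<in>UNIV. p j * u $ j)\<bar> \<le> (\<Sum>j\<in>UNIV. \<bar>p j * u $ j\<bar>)" by (rule sum_abs)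
  also have "\<dots> \<le> (\<Sum>j\<in>UNIV. p j * c)"
    by (rule sum_mono) (simp add: abs_mult assms(1) assms(3) mult_left_mono)
  also have "\<dots> = c" using assms(2) by (simp add: sum_distrib_right[symmetric])
  finally show ?thesis .
qed

lemma delta_diff:
  fixes P :: "'s::finite \<Rightarrow> 'a::finite \<Rightarrow> 's \<Rightarrow> real"
    and Phi :: "real^'n::finite^('s \<times> 'a)"
  assumes P_nonneg: "\<forall>x y z. 0 \<le> P x y z"
    and P_sum: "\<forall>x y. (\<Sum>z\<in>UNIV. P x y z) = 1"
    and g: "0 \<le> \<gamma>"
  shows "\<bar>(delta P r \<gamma> Phi \<theta> - delta P r \<gamma> Phi \<theta>s) $ i\<bar> \<le> (1 + \<gamma>) * phimax Phi * norm (\<theta> - \<theta>s)"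
proof -
  let ?c = "phimax Phi * norm (\<theta> - \<theta>s)"
  have eq: "(delta P r \<gamma> Phi \<theta> - delta P r \<gamma> Phi \<theta>s) $ i
     = \<gamma> * (\<Sum>j\<in>UNIV. P (fst i) (snd i) j * (Vfun Phi \<theta> - Vfun Phi \<theta>s) $ j) - Phi $ i \<bullet> (\<theta> - \<theta>s)"
  proof -
    have "(delta P r \<gamma> Phi \<theta> - delta P r \<gamma> Phi \<theta>s) = \<gamma> *\<^sub>R (Pmat P *v (Vfun Phi \<theta> - Vfun Phi \<theta>s)) - Phi *v (\<theta> - \<theta>s)"
      unfolding delta_def by (simp add: matrix_vector_mult_diff_distrib scaleR_diff_right)
    then have "(delta P r \<gamma> Phi \<theta> - delta P r \<gamma> Phi \<theta>s) $ i = \<gamma> * (Pmat P *v (Vfun Phi \<theta> - Vfun Phi \<theta>s)) $ i - (Phi *v (\<theta> - \<theta>s)) $ i"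
      by simp
    moreover have "(Pmat P *v u) $ i = (\<Sum>j\<in>UNIV. P (fst i) (snd i) j * u $ j)" for u
      by (simp add: matrix_vector_mult_def Pmat_def)
    ultimately show ?thesis by (simp add: matrix_vector_mul_component)
  qed
  have "\<bar>(\<Sum>j\<in>UNIV. P (fst i) (snd i) j * (Vfun Phi \<theta> - Vfun Phi \<theta>s) $ j)\<bar> \<le> ?c"
    by (rule stoch_inner) (use P_nonneg P_sum Vfun_diff in auto)
  moreover have "\<bar>Phi $ i \<bullet> (\<theta> - \<theta>s)\<bar> \<le> ?c" by (rule row_dot_bound)
  ultimately have "\<bar>(delta P r \<gamma> Phi \<theta> - delta P r \<gamma> Phi \<theta>s) $ i\<bar> \<le> \<gamma> * ?c + ?c"
  proof -
    let ?A = "(\<Sum>j\<in>UNIV. P (fst i) (snd i) j * (Vfun Phi \<theta> - Vfun Phi \<theta>s) $ j)"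
    have "\<bar>\<gamma> * ?A\<bar> \<le> \<gamma> * ?c"
      using g \<open>\<bar>?A\<bar> \<le> ?c\<close> by (simp add: abs_mult mult_left_mono)
    then show ?thesis unfolding eq
      using \<open>\<bar>Phi $ i \<bullet> (\<theta> - \<theta>s)\<bar> \<le> ?c\<close> abs_triangle_ineq4[of "\<gamma> * ?A" "Phi $ i \<bullet> (\<theta> - \<theta>s)"]
      by linarith
  qed
  then show ?thesis by (simp add: algebra_simps)
qed

lemma transpose_sum:
  fixes Phi :: "real^'n::finite^'i::finite"
  shows "transpose Phi *v v = (\<Sum>i\<in>UNIV. v $ i *\<^sub>R Phi $ i)"
  by (simp add: transpose_matrix_vector vector_matrix_mult_def vec_eq_iff sum_component)

lemma transpose_D_bound:
  fixes Phi :: "real^'n::finite^('s::finite \<times> 'a::finite)"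
  assumes "\<forall>x. 0 < d x" "(\<Sum>x\<in>UNIV. d x) = 1" "\<forall>i. \<bar>w $ i\<bar> \<le> c"
  shows "norm (transpose Phi *v (Dmat d *v w)) \<le> phimax Phi * c"
proof -
  have Dw: "(Dmat d *v w) $ i = d i * w $ i" for i
  proof -
    have "(Dmat d *v w) $ i = (\<Sum>j\<in>UNIV. if i = j then d i * w$j else 0)"
      unfolding Dmat_def matrix_vector_mult_def vec_lambda_beta by (rule sum.cong) auto
    then show ?thesis by simp
  qed
  have "norm (transpose Phi *v (Dmat d *v w)) \<le> (\<Sum>i\<in>UNIV. norm ((d i * w $ i) *\<^sub>R Phi $ i))"
    unfolding transpose_sum Dw by (rule norm_sum)
  also have "\<dots> \<le> (\<Sum>i\<in>UNIV. d i * (phimax Phi * c))"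
  proof (rule sum_mono)
    fix i
    have "norm ((d i * w $ i) *\<^sub>R Phi $ i) = d i * (\<bar>w $ i\<bar> * norm (Phi $ i))"
      using assms(1)[rule_format, of i] by (simp add: abs_mult)
    also have "\<dots> \<le> d i * (c * phimax Phi)"
    proof -
      have a: "\<bar>w $ i\<bar> \<le> c" "0 < d i" using assms(1,3) by blast+
      have "0 \<le> c" using a(1) abs_ge_zero order_trans by blast
      then show ?thesis using a phimax_ge[of Phi i]
        by (intro mult_left_mono mult_mono) auto
    qed
    finally show "norm ((d i * w $ i) *\<^sub>R Phi $ i) \<le> d i * (phimax Phi * c)" by (simp add: mult.commute)
  qed
  also have "\<dots> = phimax Phi * c" using assms(2) by (simp add: sum_distrib_right[symmetric])
  finally show ?thesis .
qed


lemma outer_axis: "outer (axis x 1) (axis x 1) *v v = (v $ x) *\<^sub>R axis x (1::real)"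
proof (subst vec_eq_iff, rule allI)
  fix i
  have "(outer (axis x 1) (axis x 1) *v v) $ i = (\<Sum>j\<in>UNIV. if j = x then (if i = x then v $ x else 0) else 0)"
    unfolding outer_def matrix_vector_mult_def vec_lambda_beta by (rule sum.cong) (auto simp: axis_def)
  then show "(outer (axis x 1) (axis x 1) *v v) $ i = ((v $ x) *\<^sub>R axis x (1::real)) $ i"
    by (simp add: axis_def)
qed

lemma transpose_axis:
  fixes Phi :: "real^'n::finite^'i::finite"
  shows "transpose Phi *v (c *\<^sub>R axis x 1) = c *\<^sub>R Phi $ x"
proof -
  have "transpose Phi *v (c *\<^sub>R axis x 1) = (\<Sum>i\<in>UNIV. (if i = x then c else 0) *\<^sub>R Phi $ i)"
    unfolding transpose_sum by (rule sum.cong) (auto simp: axis_def)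
  then show ?thesis by (simp add: if_distrib[of "\<lambda>c. c *\<^sub>R _"] cong: if_cong)
qed

lemma axis_inner: "axis x 1 \<bullet> v = v $ (x::'i::finite)"
  by (simp add: inner_axis')

lemma bxi_eq:
  "bvec P r \<gamma> Phi d \<theta> x + xivec P r \<gamma> Phi \<theta> x s' =
   (r (fst x) (snd x) s' + \<gamma> * Max (range (\<lambda>u. Phi $ (s', u) \<bullet> \<theta>)) - Phi $ x \<bullet> \<theta>) *\<^sub>R Phi $ x
   - transpose Phi *v (Dmat d *v delta P r \<gamma> Phi \<theta>)"
  unfolding bvec_def xivec_def matrix_vector_mult_diff_rdistrib matrix_vector_mult_diff_distrib
    outer_axis transpose_axis axis_inner
  by (simp add: algebra_simps)

lemma pointwise:
  fixes P :: "'s::finite \<Rightarrow> 'a::finite \<Rightarrow> 's \<Rightarrow> real"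
    and Phi :: "real^'n::finite^('s \<times> 'a)"
  assumes P_nonneg: "\<forall>x y z. 0 \<le> P x y z"
    and P_sum: "\<forall>x y. (\<Sum>z\<in>UNIV. P x y z) = 1"
    and g: "0 \<le> \<gamma>"
    and d_pos: "\<forall>x. 0 < d x"
    and d_sum: "(\<Sum>x\<in>UNIV. d x) = 1"
    and fixpt: "transpose Phi *v (Dmat d *v delta P r \<gamma> Phi \<theta>s) = 0"
    and C: "1 \<le> C"
    and C_bounds: "\<forall>x. (norm x)\<^sup>2 \<le> Vinf P d \<gamma> \<alpha> Phi \<beta> x
                   \<and> Vinf P d \<gamma> \<alpha> Phi \<beta> x \<le> C * (norm x)\<^sup>2"
  shows "peps P d \<gamma> \<alpha> Phi \<beta> (bvec P r \<gamma> Phi d \<theta> x + xivec P r \<gamma> Phi \<theta> x s')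
     \<le> 2 * sqrt C * phimax Phi * (Rmax r + (1 + \<gamma>) * infnorm (Phi *v \<theta>s))
       + 2 * sqrt C * phimax Phi * infnorm (Rvec P r + \<gamma> *\<^sub>R (Pmat P *v Vfun Phi \<theta>s) - Phi *v \<theta>s)
       + 4 * sqrt C * (1 + \<gamma>) * (phimax Phi)\<^sup>2 * peps P d \<gamma> \<alpha> Phi \<beta> (\<theta> - \<theta>s)"
proof -
  define X where "X = norm (\<theta> - \<theta>s)"
  define F where "F = phimax Phi"
  define I where "I = infnorm (Phi *v \<theta>s)"
  define st where "st = r (fst x) (snd x) s' + \<gamma> * Max (range (\<lambda>u. Phi $ (s', u) \<bullet> \<theta>)) - Phi $ x \<bullet> \<theta>"
  define v where "v = bvec P r \<gamma> Phi d \<theta> x + xivec P r \<gamma> Phi \<theta> x s'"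
  have F0: "0 \<le> F" unfolding F_def by (rule phimax_nonneg)
  have X0: "0 \<le> X" unfolding X_def by simp
  have I0: "0 \<le> I" unfolding I_def by (rule infnorm_pos_le)
  have R0: "0 \<le> Rmax r" by (rule Rmax_nonneg)
  have "transpose Phi *v (Dmat d *v delta P r \<gamma> Phi \<theta>)
      = transpose Phi *v (Dmat d *v (delta P r \<gamma> Phi \<theta> - delta P r \<gamma> Phi \<theta>s))"
    using fixpt by (simp add: matrix_vector_mult_diff_distrib)
  then have veq: "v = st *\<^sub>R Phi $ x - transpose Phi *v (Dmat d *v (delta P r \<gamma> Phi \<theta> - delta P r \<gamma> Phi \<theta>s))"
    unfolding v_def st_def bxi_eq by simp
  have n2: "norm (transpose Phi *v (Dmat d *v (delta P r \<gamma> Phi \<theta> - delta P r \<gamma> Phi \<theta>s))) \<le> F * ((1 + \<gamma>) * F * X)"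
    unfolding F_def X_def
    by (rule transpose_D_bound) (use d_pos d_sum delta_diff[OF P_nonneg P_sum g] in auto)
  have a1: "\<bar>r (fst x) (snd x) s'\<bar> \<le> Rmax r" by (rule Rmax_ge)
  have a2: "\<bar>Max (range (\<lambda>u. Phi $ (s', u) \<bullet> \<theta>))\<bar> \<le> I + F * X"
    unfolding I_def F_def X_def by (rule Vmax_bound)
  have a3: "\<bar>Phi $ x \<bullet> \<theta>\<bar> \<le> I + F * X"
  proof -
    have "Phi $ x \<bullet> \<theta> = Phi $ x \<bullet> \<theta>s + Phi $ x \<bullet> (\<theta> - \<theta>s)" by (simp add: inner_diff_right)
    moreover have "\<bar>Phi $ x \<bullet> \<theta>s\<bar> \<le> I" unfolding I_def by (rule row_dot_inf)
    moreover have "\<bar>Phi $ x \<bullet> (\<theta> - \<theta>s)\<bar> \<le> F * X" unfolding F_def X_def by (rule row_dot_bound)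
    ultimately show ?thesis by linarith
  qed
  have "\<bar>\<gamma> * Max (range (\<lambda>u. Phi $ (s', u) \<bullet> \<theta>))\<bar> \<le> \<gamma> * (I + F * X)"
    using a2 g by (simp add: abs_mult mult_left_mono)
  then have st_b: "\<bar>st\<bar> \<le> Rmax r + (1 + \<gamma>) * I + (1 + \<gamma>) * F * X"
    unfolding st_def using a1 a3 by (simp add: algebra_simps)
  have "norm (st *\<^sub>R Phi $ x) = \<bar>st\<bar> * norm (Phi $ x)" by simp
  also have "\<dots> \<le> (Rmax r + (1 + \<gamma>) * I + (1 + \<gamma>) * F * X) * F"
    using st_b phimax_ge[of Phi x] unfolding F_def by (intro mult_mono) auto
  finally have n1: "norm (st *\<^sub>R Phi $ x) \<le> (Rmax r + (1 + \<gamma>) * I + (1 + \<gamma>) * F * X) * F" .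
  have nv: "norm v \<le> F * (Rmax r + (1 + \<gamma>) * I) + 2 * (1 + \<gamma>) * F\<^sup>2 * X"
  proof -
    have "norm v \<le> norm (st *\<^sub>R Phi $ x) + norm (transpose Phi *v (Dmat d *v (delta P r \<gamma> Phi \<theta> - delta P r \<gamma> Phi \<theta>s)))"
      unfolding veq by (rule norm_triangle_ineq4)
    then show ?thesis using n1 n2 by (simp add: algebra_simps power2_eq_square)
  qed
  have pv: "peps P d \<gamma> \<alpha> Phi \<beta> v \<le> sqrt C * norm v"
  proof -
    have "peps P d \<gamma> \<alpha> Phi \<beta> v \<le> sqrt (C * (norm v)\<^sup>2)"
      unfolding peps_def using C_bounds by (simp add: real_sqrt_le_mono)
    also have "\<dots> = sqrt C * norm v" by (simp add: real_sqrt_mult)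
    finally show ?thesis .
  qed
  have px: "X \<le> peps P d \<gamma> \<alpha> Phi \<beta> (\<theta> - \<theta>s)"
  proof -
    have "sqrt ((norm (\<theta> - \<theta>s))\<^sup>2) \<le> peps P d \<gamma> \<alpha> Phi \<beta> (\<theta> - \<theta>s)"
      unfolding peps_def using C_bounds by (simp add: real_sqrt_le_mono del: real_sqrt_abs)
    then show ?thesis unfolding X_def by simp
  qed
  have sC: "0 \<le> sqrt C" using C by simp
  have c0: "0 \<le> (1 + \<gamma>) * F\<^sup>2" using g by simp
  have "sqrt C * norm v \<le> sqrt C * (F * (Rmax r + (1 + \<gamma>) * I) + 2 * (1 + \<gamma>) * F\<^sup>2 * X)"
    using nv sC by (rule mult_left_mono)
  also have "\<dots> \<le> sqrt C * (F * (Rmax r + (1 + \<gamma>) * I) + 2 * (1 + \<gamma>) * F\<^sup>2 * peps P d \<gamma> \<alpha> Phi \<beta> (\<theta> - \<theta>s))"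
    using px c0 sC g by (intro mult_left_mono add_left_mono) (auto intro: mult_left_mono)
  also have "\<dots> \<le> 2 * sqrt C * F * (Rmax r + (1 + \<gamma>) * I)
       + 2 * sqrt C * F * infnorm (Rvec P r + \<gamma> *\<^sub>R (Pmat P *v Vfun Phi \<theta>s) - Phi *v \<theta>s)
       + 4 * sqrt C * (1 + \<gamma>) * F\<^sup>2 * peps P d \<gamma> \<alpha> Phi \<beta> (\<theta> - \<theta>s)"
  proof -
    have p0: "0 \<le> peps P d \<gamma> \<alpha> Phi \<beta> (\<theta> - \<theta>s)" using px X0 by linarith
    have t1: "0 \<le> sqrt C * F * (Rmax r + (1 + \<gamma>) * I)" using sC F0 R0 I0 g by simp
    have t2: "0 \<le> 2 * sqrt C * F * infnorm (Rvec P r + \<gamma> *\<^sub>R (Pmat P *v Vfun Phi \<theta>s) - Phi *v \<theta>s)"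
      using sC F0 infnorm_pos_le by (intro mult_nonneg_nonneg) auto
    have t3: "0 \<le> sqrt C * (1 + \<gamma>) * F\<^sup>2 * peps P d \<gamma> \<alpha> Phi \<beta> (\<theta> - \<theta>s)"
      using sC g p0 by simp
    show ?thesis using t1 t2 t3 by (simp add: algebra_simps)
  qed
  finally show ?thesis using pv unfolding v_def F_def I_def by linarith
qed



lemma hist_eq_iff:
  "hist s act j \<omega> = h \<longleftrightarrow> length h = Suc j \<and> (\<forall>i<Suc j. s i \<omega> = fst (h ! i) \<and> act i \<omega> = snd (h ! i))"
  unfolding hist_def by (auto simp: list_eq_iff_nth_eq prod_eq_iff nth_append simp del: upt_Suc)

lemma hist_meas:
  assumes s_meas: "\<forall>i. s i \<in> M \<rightarrow>\<^sub>M count_space UNIV"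
    and act_meas: "\<forall>i. act i \<in> M \<rightarrow>\<^sub>M count_space UNIV"
  shows "hist s act j \<in> M \<rightarrow>\<^sub>M (count_space (UNIV :: (('s::finite \<times> 'a::finite) list) set))"
proof (subst measurable_count_space_eq_countable, simp, intro conjI ballI)
  show "hist s act j \<in> space M \<rightarrow> UNIV" by simp
  fix h :: "('s \<times> 'a) list"
  have si: "{\<omega> \<in> space M. s i \<omega> = c} \<in> sets M" for i c
    using measurable_sets[OF s_meas[rule_format, of i], of "{c}"] by (simp add: vimage_def Int_def conj_commute)
  have ai: "{\<omega> \<in> space M. act i \<omega> = c} \<in> sets M" for i c
    using measurable_sets[OF act_meas[rule_format, of i], of "{c}"] by (simp add: vimage_def Int_def conj_commute)
  show "hist s act j -` {h} \<inter> space M \<in> sets M"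
  proof (cases "length h = Suc j")
    case True
    have "hist s act j -` {h} \<inter> space M =
        (\<Inter>i\<in>{..<Suc j}. {\<omega> \<in> space M. s i \<omega> = fst (h ! i)} \<inter> {\<omega> \<in> space M. act i \<omega> = snd (h ! i)})"
      using True by (simp add: set_eq_iff hist_eq_iff[of s act j _ h]) blast
    also have "\<dots> \<in> sets M" using si ai by (intro sets.finite_INT) auto
    finally show ?thesis .
  next
    case False
    then have "hist s act j -` {h} \<inter> space M = {}" by (simp add: set_eq_iff hist_eq_iff[of s act j _ h])
    then show ?thesis by simp
  qed
qed

lemma Filt_subalg:
  fixes s :: "nat \<Rightarrow> 'w \<Rightarrow> 's::finite" and act :: "nat \<Rightarrow> 'w \<Rightarrow> 'a::finite"
  assumes s_meas: "\<forall>i. s i \<in> M \<rightarrow>\<^sub>M count_space UNIV"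
    and act_meas: "\<forall>i. act i \<in> M \<rightarrow>\<^sub>M count_space UNIV"
  shows "subalgebra M (Filt M s act j)"
  unfolding subalgebra_def
proof
  show "space (Filt M s act j) = space M" by (simp add: Filt_def)
  have hm: "hist s act j \<in> M \<rightarrow>\<^sub>M count_space UNIV" by (rule hist_meas[OF s_meas act_meas])
  show "sets (Filt M s act j) \<subseteq> sets M"
    unfolding Filt_def
    by (subst sets_vimage_algebra2) (auto intro: measurable_sets[OF hm])
qed

lemma fun_of_hist:
  fixes f :: "'w \<Rightarrow> real" and H :: "'w \<Rightarrow> 'h"
  assumes dep: "\<forall>\<omega>\<in>space M. \<forall>\<omega>'\<in>space M. H \<omega> = H \<omega>' \<longrightarrow> f \<omega> = f \<omega>'"
    and fin: "finite S" and HS: "\<forall>\<omega>\<in>space M. H \<omega> \<in> S"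
  shows "f \<in> borel_measurable (vimage_algebra (space M) H (count_space UNIV))"
    and "\<exists>B. \<forall>\<omega>\<in>space M. norm (f \<omega>) \<le> B"
proof -
  define G where "G h = f (inv_into (space M) H h)" for h
  have fG: "f \<omega> = G (H \<omega>)" if "\<omega> \<in> space M" for \<omega>
  proof -
    have "H \<omega> \<in> H ` space M" using that by simp
    then have "inv_into (space M) H (H \<omega>) \<in> space M" "H (inv_into (space M) H (H \<omega>)) = H \<omega>"
      by (auto intro: inv_into_into f_inv_into_f)
    then show ?thesis unfolding G_def using dep that by metis
  qed
  have "(\<lambda>\<omega>. G (H \<omega>)) \<in> borel_measurable (vimage_algebra (space M) H (count_space UNIV))"
    by (rule measurable_compose[OF measurable_vimage_algebra1]) auto
  then show "f \<in> borel_measurable (vimage_algebra (space M) H (count_space UNIV))"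
    by (rule measurable_cong[THEN iffD1, rotated]) (simp add: fG)
  show "\<exists>B. \<forall>\<omega>\<in>space M. norm (f \<omega>) \<le> B"
  proof (intro exI ballI)
    fix \<omega> assume w: "\<omega> \<in> space M"
    have "norm (G (H \<omega>)) \<le> Max ((\<lambda>h. norm (G h)) ` S)"
      using fin HS w by (intro Max_ge) auto
    then show "norm (f \<omega>) \<le> Max ((\<lambda>h. norm (G h)) ` S)" using fG[OF w] by simp
  qed
qed

lemma qtheta_cong:
  "(\<forall>j\<le>k. s j \<omega> = s j \<omega>' \<and> act j \<omega> = act j \<omega>') \<Longrightarrow>
   qtheta r \<gamma> \<alpha> Phi \<theta>0 s act k \<omega> = qtheta r \<gamma> \<alpha> Phi \<theta>0 s act k \<omega>'"
  by (induction k) (auto simp: Let_def)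

lemma hist_eq_D: "hist s act k \<omega> = hist s act k \<omega>' \<Longrightarrow> j \<le> k \<Longrightarrow> s j \<omega> = s j \<omega>' \<and> act j \<omega> = act j \<omega>'"
  unfolding hist_eq_iff[of s act k \<omega>] by (auto simp: hist_def simp del: upt_Suc)


theorem lemma6:
  fixes P :: "'s::finite \<Rightarrow> 'a::finite \<Rightarrow> 's \<Rightarrow> real"
    and r :: "'s \<Rightarrow> 'a \<Rightarrow> 's \<Rightarrow> real"
    and \<gamma> \<alpha> \<epsilon> C :: real
    and Phi :: "real^'n::finite^('s \<times> 'a)"
    and bpol :: "'s \<Rightarrow> 'a \<Rightarrow> real"
    and d :: "'s \<times> 'a \<Rightarrow> real"
    and M :: "'w measure"
    and s :: "nat \<Rightarrow> 'w \<Rightarrow> 's" and act :: "nat \<Rightarrow> 'w \<Rightarrow> 'a"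
    and \<theta>0 \<theta>s :: "real^'n"
    and k :: nat
  assumes P_nonneg: "\<forall>x y z. 0 \<le> P x y z"
    and P_sum: "\<forall>x y. (\<Sum>z\<in>UNIV. P x y z) = 1"
    and gamma: "0 < \<gamma>" "\<gamma> < 1"
    and alpha: "0 < \<alpha>" "\<alpha> < 1"
    and Phi_rank: "rank Phi = CARD('n)"
    and b_nonneg: "\<forall>x y. 0 \<le> bpol x y"
    and b_sum: "\<forall>x. (\<Sum>y\<in>UNIV. bpol x y) = 1"
    and d_pos: "\<forall>x. 0 < d x"
    and d_sum: "(\<Sum>x\<in>UNIV. d x) = 1"
    and d_stat: "\<forall>s' a'. d (s', a') = (\<Sum>x\<in>UNIV. d x * P (fst x) (snd x) s' * bpol s' a')"
    and M: "prob_space M"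
    and s_meas: "\<forall>i. s i \<in> M \<rightarrow>\<^sub>M count_space UNIV"
    and act_meas: "\<forall>i. act i \<in> M \<rightarrow>\<^sub>M count_space UNIV"
    and markov: "\<forall>j h s' a'.
        measure M {\<omega> \<in> space M. hist s act j \<omega> = h \<and> s (Suc j) \<omega> = s' \<and> act (Suc j) \<omega> = a'}
        = measure M {\<omega> \<in> space M. hist s act j \<omega> = h} * P (fst (last h)) (snd (last h)) s' * bpol s' a'"
    and rho: "rho_dir P d \<gamma> \<alpha> Phi < 1"
    and fixpt: "transpose Phi *v (Dmat d *v delta P r \<gamma> Phi \<theta>s) = 0"
    and eps: "0 < \<epsilon>" "rho_dir P d \<gamma> \<alpha> Phi + \<epsilon> < 1"
    and C: "1 \<le> C"
    and C_bounds: "\<forall>x. (norm x)\<^sup>2 \<le> Vinf P d \<gamma> \<alpha> Phi (rho_dir P d \<gamma> \<alpha> Phi + \<epsilon>) x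
                   \<and> Vinf P d \<gamma> \<alpha> Phi (rho_dir P d \<gamma> \<alpha> Phi + \<epsilon>) x \<le> C * (norm x)\<^sup>2"
  shows "AE \<omega> in M.
     real_cond_exp M (Filt M s act k)
       (\<lambda>\<omega>. peps P d \<gamma> \<alpha> Phi (rho_dir P d \<gamma> \<alpha> Phi + \<epsilon>)
              (bvec P r \<gamma> Phi d (qtheta r \<gamma> \<alpha> Phi \<theta>0 s act k \<omega>) (s k \<omega>, act k \<omega>)
               + xivec P r \<gamma> Phi (qtheta r \<gamma> \<alpha> Phi \<theta>0 s act k \<omega>) (s k \<omega>, act k \<omega>) (s (Suc k) \<omega>))) \<omega>
     \<le> 2 * sqrt C * phimax Phi * (Rmax r + (1 + \<gamma>) * infnorm (Phi *v \<theta>s))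
       + 2 * sqrt C * phimax Phi * infnorm (Rvec P r + \<gamma> *\<^sub>R (Pmat P *v Vfun Phi \<theta>s) - Phi *v \<theta>s)
       + 4 * sqrt C * (1 + \<gamma>) * (phimax Phi)\<^sup>2
           * peps P d \<gamma> \<alpha> Phi (rho_dir P d \<gamma> \<alpha> Phi + \<epsilon>) (qtheta r \<gamma> \<alpha> Phi \<theta>0 s act k \<omega> - \<theta>s)"
  proof -
  define \<beta> where "\<beta> = rho_dir P d \<gamma> \<alpha> Phi + \<epsilon>"
  define f where "f = (\<lambda>\<omega>. peps P d \<gamma> \<alpha> Phi \<beta>
              (bvec P r \<gamma> Phi d (qtheta r \<gamma> \<alpha> Phi \<theta>0 s act k \<omega>) (s k \<omega>, act k \<omega>)
               + xivec P r \<gamma> Phi (qtheta r \<gamma> \<alpha> Phi \<theta>0 s act k \<omega>) (s k \<omega>, act k \<omega>) (s (Suc k) \<omega>)))"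
  define g where "g = (\<lambda>\<omega>. 2 * sqrt C * phimax Phi * (Rmax r + (1 + \<gamma>) * infnorm (Phi *v \<theta>s))
       + 2 * sqrt C * phimax Phi * infnorm (Rvec P r + \<gamma> *\<^sub>R (Pmat P *v Vfun Phi \<theta>s) - Phi *v \<theta>s)
       + 4 * sqrt C * (1 + \<gamma>) * (phimax Phi)\<^sup>2
           * peps P d \<gamma> \<alpha> Phi \<beta> (qtheta r \<gamma> \<alpha> Phi \<theta>0 s act k \<omega> - \<theta>s))"
  interpret prob_space M by (rule M)
  have sub: "subalgebra M (Filt M s act k)" by (rule Filt_subalg[OF s_meas act_meas])
  have sub1: "subalgebra M (Filt M s act (Suc k))" by (rule Filt_subalg[OF s_meas act_meas])
  interpret fms: finite_measure_subalgebra M "Filt M s act k"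
    by unfold_locales (rule sub)
  have len: "length (hist s act j \<omega>) = Suc j" for j \<omega> by (simp add: hist_def del: upt_Suc)
  have fdep: "\<forall>\<omega>\<in>space M. \<forall>\<omega>'\<in>space M. hist s act (Suc k) \<omega> = hist s act (Suc k) \<omega>' \<longrightarrow> f \<omega> = f \<omega>'"
  proof (intro ballI impI)
    fix \<omega> \<omega>' assume h: "hist s act (Suc k) \<omega> = hist s act (Suc k) \<omega>'"
    have e: "s j \<omega> = s j \<omega>' \<and> act j \<omega> = act j \<omega>'" if "j \<le> Suc k" for j
      using hist_eq_D[OF h that] .
    have "qtheta r \<gamma> \<alpha> Phi \<theta>0 s act k \<omega> = qtheta r \<gamma> \<alpha> Phi \<theta>0 s act k \<omega>'"
      by (rule qtheta_cong) (use e in auto)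
    then show "f \<omega> = f \<omega>'" unfolding f_def using e[of k] e[of "Suc k"] by simp
  qed
  have gdep: "\<forall>\<omega>\<in>space M. \<forall>\<omega>'\<in>space M. hist s act k \<omega> = hist s act k \<omega>' \<longrightarrow> g \<omega> = g \<omega>'"
  proof (intro ballI impI)
    fix \<omega> \<omega>' assume h: "hist s act k \<omega> = hist s act k \<omega>'"
    have "qtheta r \<gamma> \<alpha> Phi \<theta>0 s act k \<omega> = qtheta r \<gamma> \<alpha> Phi \<theta>0 s act k \<omega>'"
      by (rule qtheta_cong) (use hist_eq_D[OF h] in auto)
    then show "g \<omega> = g \<omega>'" unfolding g_def by simp
  qed
  have finS: "finite {xs :: ('s \<times> 'a) list. length xs = Suc j}" for j by (rule finite_list_length)
  note fh = fun_of_hist[OF fdep finS, of "Suc k"]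
  note gh = fun_of_hist[OF gdep finS, of k]
  have fF: "f \<in> borel_measurable (Filt M s act (Suc k))"
    unfolding Filt_def by (rule fh(1)) (simp add: len)
  have gF: "g \<in> borel_measurable (Filt M s act k)"
    unfolding Filt_def by (rule gh(1)) (simp add: len)
  have fM: "f \<in> borel_measurable M" by (rule measurable_from_subalg[OF sub1 fF])
  have gM: "g \<in> borel_measurable M" by (rule measurable_from_subalg[OF sub gF])
  obtain Bf where Bf: "\<forall>\<omega>\<in>space M. norm (f \<omega>) \<le> Bf" using fh(2) len by auto
  obtain Bg where Bg: "\<forall>\<omega>\<in>space M. norm (g \<omega>) \<le> Bg" using gh(2) len by auto
  have fI: "integrable M f" by (rule integrable_const_bound[of _ Bf]) (use Bf fM in auto)
  have gI: "integrable M g" by (rule integrable_const_bound[of _ Bg]) (use Bg gM in auto)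
  have fg: "f \<omega> \<le> g \<omega>" for \<omega>
    unfolding f_def g_def
    by (rule pointwise[OF P_nonneg P_sum _ d_pos d_sum fixpt C C_bounds[unfolded \<beta>_def[symmetric]]])
      (use gamma in simp)
  have "AE \<omega> in M. real_cond_exp M (Filt M s act k) f \<omega> \<le> real_cond_exp M (Filt M s act k) g \<omega>"
    by (rule fms.real_cond_exp_mono[OF AE_I2[OF fg] fI gI])
  moreover have "AE \<omega> in M. real_cond_exp M (Filt M s act k) g \<omega> = g \<omega>"
    by (rule fms.real_cond_exp_F_meas[OF gI gF])
  ultimately have "AE \<omega> in M. real_cond_exp M (Filt M s act k) f \<omega> \<le> g \<omega>" by eventually_elim simp
  then show ?thesis unfolding f_def g_def \<beta>_def by simp
qed


end
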